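(* Let $\langle N,P,c,b,\mathcal{A}\rangle$ be any PB instance and let $S$ be the output of the algorithm Ordered-Relax on it. Then $S$ is feasible ($c(S)\le b$) and $$ALG\ \ge\ OPT-\frac{|A_j\setminus S|}{|S\setminus A_j|}\,(b-OPT),$$ where $j\in\arg\min_{i\in N}c(A_i\cap S)$, $ALG=c(A_j\cap S)$, and $OPT=\max_{T\subseteq P,\,c(T)\le b}\min_{i\in N}c(T\cap A_i)$ is the minimum utility in an optimal MPB solution.
   Context: A PB instance is $\langle N,P,c,b,\mathcal{A}\rangle$ with voters $N=\{1,\dots,n\}$, projects $P=\{p_1,\dots,p_m\}$, costs $c:P\to\mathbb{N}$, budget $b\in\mathbb{N}$, and approval sets $A_i\subseteq P$. $c(S)=\sum_{p\in S}c(p)$; $S$ is feasible if $c(S)\le b$. Algorithm Ordered-Relax: compute an optimal solution $(q^*,x^* )$ of the linear program: maximize $q$ subject to $q\le\sum_{p\in A_i}c(p)x_p$ for all $i\in N$, $\sum_{p\in P}c(p)x_p\le b$, $0\le x_p\le 1$ for all $p\in P$, $q\ge 0$. Then order the projects in non-increasing order of $c(p)x^*_p$ (ties broken arbitrarily), start with $S=\emptyset$, and add projects to $S$ in this order, stopping as soon as the next project in the order does not fit within the remaining budget (i.e., would make $c(S)$ exceed $b$); output $S$. *)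

theory Defs
  imports Complex_Main
begin

(* Voters are 1..n, approval sets A :: nat => 'p set, projects P :: 'p set (finite),
   costs c :: 'p => nat, budget b :: nat. *)

definition cost :: "('p \<Rightarrow> nat) \<Rightarrow> 'p set \<Rightarrow> nat" where
  "cost c S = (\<Sum>p\<in>S. c p)"

definition min_util :: "nat \<Rightarrow> (nat \<Rightarrow> 'p set) \<Rightarrow> ('p \<Rightarrow> nat) \<Rightarrow> 'p set \<Rightarrow> nat" where
  "min_util n A c T = Min ((\<lambda>i. cost c (T \<inter> A i)) ` {1..n})"

definition OPT :: "nat \<Rightarrow> 'p set \<Rightarrow> ('p \<Rightarrow> nat) \<Rightarrow> nat \<Rightarrow> (nat \<Rightarrow> 'p set) \<Rightarrow> nat" where
  "OPT n P c b A = Max ((\<lambda>T. min_util n A c T) ` {T. T \<subseteq> P \<and> cost c T \<le> b})"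

definition lp_feasible :: "nat \<Rightarrow> 'p set \<Rightarrow> ('p \<Rightarrow> nat) \<Rightarrow> nat \<Rightarrow> (nat \<Rightarrow> 'p set)
    \<Rightarrow> real \<Rightarrow> ('p \<Rightarrow> real) \<Rightarrow> bool" where
  "lp_feasible n P c b A q x \<longleftrightarrow>
     (\<forall>i\<in>{1..n}. q \<le> (\<Sum>p\<in>A i. real (c p) * x p)) \<and>
     (\<Sum>p\<in>P. real (c p) * x p) \<le> real b \<and>
     (\<forall>p\<in>P. 0 \<le> x p \<and> x p \<le> 1) \<and> q \<ge> 0"

definition lp_optimal :: "nat \<Rightarrow> 'p set \<Rightarrow> ('p \<Rightarrow> nat) \<Rightarrow> nat \<Rightarrow> (nat \<Rightarrow> 'p set)
    \<Rightarrow> real \<Rightarrow> ('p \<Rightarrow> real) \<Rightarrow> bool" where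
  "lp_optimal n P c b A q x \<longleftrightarrow> lp_feasible n P c b A q x \<and>
     (\<forall>q' x'. lp_feasible n P c b A q' x' \<longrightarrow> q' \<le> q)"

fun greedy_prefix :: "('p \<Rightarrow> nat) \<Rightarrow> nat \<Rightarrow> 'p list \<Rightarrow> 'p list" where
  "greedy_prefix c r [] = []"
| "greedy_prefix c r (p # ps) =
     (if c p \<le> r then p # greedy_prefix c (r - c p) ps else [])"

(* S is a possible output of Ordered-Relax: for some optimal LP solution (q_opt, x_opt)
   and some ordering of P that is non-increasing in c(p) x_opt(p) (arbitrary ties) *)
definition ordered_relax_output :: "nat \<Rightarrow> 'p set \<Rightarrow> ('p \<Rightarrow> nat) \<Rightarrow> nat \<Rightarrow> (nat \<Rightarrow> 'p set)
    \<Rightarrow> 'p set \<Rightarrow> bool" where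
  "ordered_relax_output n P c b A S \<longleftrightarrow>
     (\<exists>q x ps. lp_optimal n P c b A q x \<and> distinct ps \<and> set ps = P \<and>
        sorted_wrt (\<lambda>p p'. real (c p) * x p \<ge> real (c p') * x p') ps \<and>
        S = set (greedy_prefix c b ps))"

end

theory Submission
  imports Defs
begin

lemma gp_take: "greedy_prefix c r ps = take (length (greedy_prefix c r ps)) ps"
  by (induction ps arbitrary: r) auto

lemma gp_sum: "sum_list (map c (greedy_prefix c r ps)) \<le> r"
proof (induction ps arbitrary: r)
  case (Cons a ps)
  show ?case using Cons.IH[of "r - c a"] by auto
qed simp

lemma OPT_le_q:
  assumes fin: "finite P" and sub: "\<forall>i\<in>{1..n}. A i \<subseteq> P"
    and opt: "lp_optimal n P c b A q x"
  shows "real (OPT n P c b A) \<le> q"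
proof -
  let ?F = "{T. T \<subseteq> P \<and> cost c T \<le> b}"
  have finF: "finite ?F" proof (rule finite_subset[of _ "Pow P"])
    show "finite (Pow P)" using fin by simp
  qed auto
  have "{} \<in> ?F" by (simp add: cost_def)
  hence ne: "(\<lambda>T. min_util n A c T) ` ?F \<noteq> {}" by blast
  have "OPT n P c b A \<in> (\<lambda>T. min_util n A c T) ` ?F"
    unfolding OPT_def using finF ne by (intro Max_in) auto
  then obtain T where T: "T \<subseteq> P" "cost c T \<le> b" and eq: "OPT n P c b A = min_util n A c T"
    by auto
  define z where "z = (\<lambda>p. if p \<in> T then (1::real) else 0)"
  have sumz: "(\<Sum>p\<in>B. real (c p) * z p) = real (cost c (B \<inter> T))" if "finite B" for B
  proof -
    have "(\<Sum>p\<in>B. real (c p) * z p) = (\<Sum>p\<in>B. if p \<in> T then real (c p) else 0)"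
      by (rule sum.cong) (auto simp: z_def)
    also have "\<dots> = (\<Sum>p\<in>B \<inter> T. real (c p))" using that by (simp add: sum.inter_restrict)
    finally show ?thesis by (simp add: cost_def)
  qed
  have "lp_feasible n P c b A (real (min_util n A c T)) z"
    unfolding lp_feasible_def
  proof (intro conjI ballI)
    fix i assume i: "i \<in> {1..n}"
    have finA: "finite (A i)" using sub i fin finite_subset by blast
    have "min_util n A c T \<le> cost c (T \<inter> A i)"
      unfolding min_util_def using i by (intro Min_le) auto
    thus "real (min_util n A c T) \<le> (\<Sum>p\<in>A i. real (c p) * z p)"
      using sumz[OF finA] by (simp add: Int_commute)
  next
    show "(\<Sum>p\<in>P. real (c p) * z p) \<le> real b"
      using sumz[OF fin] T by (simp add: Int_absorb1 Int_commute)
  qed (auto simp: z_def)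
  with opt show ?thesis unfolding lp_optimal_def eq by blast
qed

theorem lemma1:
  fixes n :: nat and P :: "'p set" and c :: "'p \<Rightarrow> nat" and b :: nat
    and A :: "nat \<Rightarrow> 'p set" and S :: "'p set" and j :: nat
  assumes "n \<ge> 1" and "finite P" and "\<forall>i\<in>{1..n}. A i \<subseteq> P"
    and "ordered_relax_output n P c b A S"
    and "j \<in> {1..n}" and "\<forall>i\<in>{1..n}. cost c (A j \<inter> S) \<le> cost c (A i \<inter> S)"
  shows "cost c S \<le> b \<and>
    (S - A j \<noteq> {} \<longrightarrow>
      real (cost c (A j \<inter> S)) \<ge> real (OPT n P c b A)
        - real (card (A j - S)) / real (card (S - A j)) * (real b - real (OPT n P c b A)))"
proof -
  obtain q x ps where opt: "lp_optimal n P c b A q x" and dist: "distinct ps" and setps: "set ps = P"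
    and sorted: "sorted_wrt (\<lambda>p p'. real (c p) * x p \<ge> real (c p') * x p') ps"
    and Sdef: "S = set (greedy_prefix c b ps)"
    using assms(4) unfolding ordered_relax_output_def by blast
  define k where "k = length (greedy_prefix c b ps)"
  have gk: "greedy_prefix c b ps = take k ps" unfolding k_def by (rule gp_take)
  have Stake: "S = set (take k ps)" using Sdef gk by simp
  have costS: "cost c S \<le> b"
  proof -
    have "distinct (take k ps)" using dist by simp
    hence "cost c S = sum_list (map c (take k ps))"
      unfolding Stake cost_def by (simp add: sum_list_distinct_conv_sum_set)
    thus ?thesis using gp_sum[of c b ps] gk by simp
  qed
  define y where "y = (\<lambda>p. real (c p) * x p)"
  have feas: "lp_feasible n P c b A q x" using opt unfolding lp_optimal_def by blast
  have x01: "\<And>p. p \<in> P \<Longrightarrow> 0 \<le> x p \<and> x p \<le> 1" using feas unfolding lp_feasible_def by blast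
  have qle: "q \<le> sum y (A j)" using feas assms(5) unfolding lp_feasible_def y_def by blast
  have sumP: "sum y P \<le> real b" using feas unfolding lp_feasible_def y_def by blast
  have OPTq: "real (OPT n P c b A) \<le> q" using OPT_le_q[OF assms(2) assms(3) opt] .
  have AjP: "A j \<subseteq> P" using assms(3,5) by blast
  have SP: "S \<subseteq> P" using Stake setps by (metis set_take_subset)
  have finAj: "finite (A j)" using AjP assms(2) finite_subset by blast
  have finS: "finite S" using SP assms(2) finite_subset by blast
  have ypos: "\<And>p. p \<in> P \<Longrightarrow> 0 \<le> y p" using x01 unfolding y_def by simp
  have yle: "\<And>p. p \<in> P \<Longrightarrow> y p \<le> real (c p)" unfolding y_def
    using x01 by (simp add: mult_left_le)
  have order: "\<And>s p. s \<in> S \<Longrightarrow> p \<in> P \<Longrightarrow> p \<notin> S \<Longrightarrow> y p \<le> y s"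
  proof -
    fix s p assume s: "s \<in> S" and p: "p \<in> P" "p \<notin> S"
    have "sorted_wrt (\<lambda>p p'. real (c p) * x p \<ge> real (c p') * x p') (take k ps @ drop k ps)"
      using sorted by simp
    moreover have "p \<in> set (drop k ps)" using p setps Stake
      by (metis Un_iff append_take_drop_id set_append)
    ultimately show "y p \<le> y s" using s Stake unfolding sorted_wrt_append y_def by blast
  qed
  show ?thesis
  proof (intro conjI impI costS)
    assume ne: "S - A j \<noteq> {}"
    define D where "D = S - A j"
    have finD: "finite D" using finS D_def by simp
    define t where "t = Min (y ` D)"
    have tin: "t \<in> y ` D" unfolding t_def using finD ne D_def by (intro Min_in) auto
    have tle: "\<And>s. s \<in> D \<Longrightarrow> t \<le> y s" unfolding t_def using finD by simp
    define a where "a = real (card (A j - S))"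
    define s where "s = real (card D)"
    have spos: "s > 0" unfolding s_def using finD ne D_def by (simp add: card_gt_0_iff)
    have a0: "a \<ge> 0" unfolding a_def by simp
    let ?C = "real (cost c (A j \<inter> S))"
    have t0: "t \<ge> 0" using tin ypos SP D_def by auto
    have split1: "sum y (A j) = sum y (A j \<inter> S) + sum y (A j - S)"
      using finAj by (metis Diff_Int2 Int_commute sum.Int_Diff inf.idem)
    have b1: "sum y (A j \<inter> S) \<le> ?C"
      unfolding cost_def of_nat_sum using AjP yle by (intro sum_mono) auto
    have b2: "sum y (A j - S) \<le> a * t"
    proof -
      have "sum y (A j - S) \<le> sum (\<lambda>_. t) (A j - S)"
      proof (rule sum_mono)
        fix p assume p: "p \<in> A j - S"
        from tin obtain s0 where "s0 \<in> D" "t = y s0" by auto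
        thus "y p \<le> t" using order[of s0 p] p AjP D_def by auto
      qed
      thus ?thesis unfolding a_def by simp
    qed
    have b3: "s * t \<le> sum y D"
    proof -
      have "sum (\<lambda>_. t) D \<le> sum y D" by (rule sum_mono) (rule tle)
      thus ?thesis unfolding s_def by simp
    qed
    have b4: "sum y D \<le> sum y (P - A j)"
      using SP D_def ypos assms(2) by (intro sum_mono2) auto
    have b5: "sum y P = sum y (A j) + sum y (P - A j)"
      using assms(2) AjP by (metis sum.subset_diff add.commute)
    have key1: "q \<le> ?C + a * t" using qle split1 b1 b2 by linarith
    have key2: "s * t \<le> real b - q" using b3 b4 b5 sumP qle by linarith
    have "a * (s * t) \<le> a * (real b - q)" using key2 a0 by (rule mult_left_mono)
    moreover have "s * q \<le> s * (?C + a * t)" using key1 spos by (intro mult_left_mono) auto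
    ultimately have "s * (?C - q) + a * (real b - q) \<ge> 0"
      by (simp add: algebra_simps)
    hence "(q - ?C) * s \<le> a * (real b - q)" by (simp add: algebra_simps)
    hence "q - ?C \<le> a * (real b - q) / s" using spos by (simp add: pos_le_divide_eq)
    hence "?C \<ge> q - a / s * (real b - q)" by simp
    moreover have "q - a / s * (real b - q) \<ge> real (OPT n P c b A) - a / s * (real b - real (OPT n P c b A))"
    proof -
      have "a / s \<ge> 0" using a0 spos by simp
      hence "a / s * (real b - q) \<le> a / s * (real b - real (OPT n P c b A))"
        using OPTq by (intro mult_left_mono) auto
      thus ?thesis using OPTq by linarith
    qed
    ultimately show "?C \<ge> real (OPT n P c b A) - real (card (A j - S)) / real (card (S - A j)) * (real b - real (OPT n P c b A))"
      unfolding a_def s_def D_def by linarith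
  qed
qed

end
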